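(* Let $K\subset\mathbb R^d$ be compact and $q>1$. There exists $C_q>0$ such that for any $\mu\in\mathcal F(K)$ and any $r>0$ there exists $\delta>0$ such that every $\nu\in\mathcal P(K)$ with $L(\mu,\nu)<\delta$ satisfies $I_\nu(r,q)\le C_qI_\mu(2r,q)$ and $I_\nu(2r,q)\ge C_q^{-1}I_\mu(r,q)$.
   Context: $\mathcal P(K)$ is the set of Borel probability measures on $K$, $\mathcal F(K)$ the subset of those with finite support. $L$ is the Fortet–Mourier metric $L(\mu,\nu)=\sup_f|\int fd\mu-\int fd\nu|$ over $f:K\to\mathbb R$ with $|f|\le1$ and Lipschitz constant $\le1$. $B(x,r)$ is the open ball and $I_\mu(r,q)=\int_K\mu(B(x,r))^{q-1}d\mu(x)$. *)

theory Defs
  imports "HOL-Probability.Probability"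
begin

text \<open>Borel probability measures on K, represented as Borel probability measures
  on the ambient space that are concentrated on K.\<close>
definition prob_on :: "'a::euclidean_space set \<Rightarrow> 'a measure \<Rightarrow> bool" where
  "prob_on K M \<longleftrightarrow> sets M = sets borel \<and> prob_space M \<and> emeasure M K = 1"

definition finsupp_on :: "'a::euclidean_space set \<Rightarrow> 'a measure \<Rightarrow> bool" where
  "finsupp_on K M \<longleftrightarrow> prob_on K M \<and> (\<exists>S. finite S \<and> S \<subseteq> K \<and> emeasure M S = 1)"

definition FM_dist :: "'a::euclidean_space set \<Rightarrow> 'a measure \<Rightarrow> 'a measure \<Rightarrow> real" where
  "FM_dist K M N = Sup {\<bar>(LINT x:K|M. f x) - (LINT x:K|N. f x)\<bar> | f.
      (\<forall>x\<in>K. \<bar>f x\<bar> \<le> 1) \<and> 1-lipschitz_on K f}"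

definition corr_int :: "'a::euclidean_space measure \<Rightarrow> real \<Rightarrow> real \<Rightarrow> real" where
  "corr_int M r q = (\<integral>x. (measure M (ball x r)) powr (q - 1) \<partial>M)"

end

theory Submission
  imports Defs
begin

lemma prob_onD:
  assumes "prob_on K N"
  shows "prob_space N" "sets N = sets borel" "space N = UNIV" "AE y in N. y \<in> K" "measure N K = 1"
    "K \<in> sets borel"
proof -
  show ps: "prob_space N" and se: "sets N = sets borel" using assms by (auto simp: prob_on_def)
  then show sp: "space N = UNIV" by (metis sets_eq_imp_space_eq space_borel)
  have e: "emeasure N K = 1" using assms by (auto simp: prob_on_def)
  have Kin: "K \<in> sets N" using e by (metis emeasure_notin_sets zero_neq_one)
  then show "measure N K = 1" using e by (simp add: measure_def)
  show "K \<in> sets borel" using Kin se by simp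
  show "AE y in N. y \<in> K"
    using prob_space.AE_prob_1[OF ps \<open>measure N K = 1\<close>] .
qed

lemma meas_ball_measurable:
  fixes N :: "'a::euclidean_space measure"
  assumes "prob_on K N"
  shows "(\<lambda>y. measure N (ball y s)) \<in> borel_measurable N"
proof -
  interpret prob_space N using prob_onD[OF assms] by simp
  have se: "sets N = sets borel" using prob_onD[OF assms] by simp
  have op: "open {p::'a\<times>'a. dist (fst p) (snd p) < s}"
    by (intro open_Collect_less continuous_intros)
  have "sets (borel \<Otimes>\<^sub>M N) = sets (borel \<Otimes>\<^sub>M (borel::'a measure))"
    by (intro sets_pair_measure_cong) (simp_all add: se)
  also have "\<dots> = sets (borel :: ('a\<times>'a) measure)" by (subst borel_prod) (rule refl)
  finally have Q: "{p::'a\<times>'a. dist (fst p) (snd p) < s} \<in> sets (borel \<Otimes>\<^sub>M N)"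
    using op by simp
  have "(\<lambda>x. emeasure N (Pair x -` {p::'a\<times>'a. dist (fst p) (snd p) < s})) \<in> borel_measurable borel"
    by (rule measurable_emeasure_Pair[OF Q])
  moreover have "\<And>x. Pair x -` {p::'a\<times>'a. dist (fst p) (snd p) < s} = ball x s"
    by (auto simp: ball_def)
  ultimately have "(\<lambda>x. emeasure N (ball x s)) \<in> borel_measurable borel" by simp
  then have "(\<lambda>x. enn2real (emeasure N (ball x s))) \<in> borel_measurable borel" by measurable
  then show ?thesis
    by (simp add: measure_def measurable_cong_sets[OF se refl])
qed

lemma set_int_bound:
  fixes M :: "'a::euclidean_space measure" and f :: "'a \<Rightarrow> real"
  assumes "prob_on K M" "\<forall>x\<in>K. \<bar>f x\<bar> \<le> (1::real)"
  shows "\<bar>LINT x:K|M. f x\<bar> \<le> 1"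
proof -
  interpret prob_space M using prob_onD[OF assms(1)] by simp
  have b: "\<And>x. \<bar>indicator K x *\<^sub>R f x\<bar> \<le> 1" using assms(2)
    by (auto simp: indicator_def)
  show ?thesis
  proof (cases "integrable M (\<lambda>x. indicator K x *\<^sub>R f x)")
    case True
    have "\<bar>\<integral>x. indicator K x *\<^sub>R f x \<partial>M\<bar> \<le> (\<integral>x. 1 \<partial>M)"
      by (rule integral_abs_bound_integral[OF True]) (use b in auto)
    then show ?thesis by (simp add: set_lebesgue_integral_def prob_space)
  next
    case False
    then show ?thesis by (simp add: set_lebesgue_integral_def not_integrable_integral_eq)
  qed
qed

lemma set_int_eq:
  fixes M :: "'a::euclidean_space measure" and f :: "'a \<Rightarrow> real"
  assumes "prob_on K M" "f \<in> borel_measurable borel"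
  shows "(LINT x:K|M. f x) = (\<integral>x. f x \<partial>M)"
proof -
  note P = prob_onD[OF assms(1)]
  have fm: "f \<in> borel_measurable M" using assms(2) by (simp add: measurable_cong_sets[OF P(2) refl])
  have Km: "K \<in> sets M" using P by simp
  show ?thesis unfolding set_lebesgue_integral_def
  proof (rule integral_cong_AE)
    show "(\<lambda>x. indicator K x *\<^sub>R f x) \<in> borel_measurable M"
      by (intro borel_measurable_scaleR borel_measurable_indicator Km fm)
    show "f \<in> borel_measurable M" by (rule fm)
    show "AE x in M. indicator K x *\<^sub>R f x = f x"
      using P(4) by eventually_elim (simp add: indicator_def)
  qed
qed

lemma bound2:
  fixes M :: "'a::euclidean_space measure" and f :: "'a \<Rightarrow> real"
  assumes "prob_on K M" "prob_on K N"
  shows "\<forall>x\<in>K. \<bar>f x\<bar> \<le> 1 \<Longrightarrow> \<bar>(LINT x:K|M. f x) - (LINT x:K|N. f x)\<bar> \<le> 2"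
proof -
  assume g: "\<forall>x\<in>K. \<bar>f x\<bar> \<le> 1"
  have "\<bar>LINT x:K|M. f x\<bar> \<le> 1" by (rule set_int_bound) (use assms g in simp_all)
  moreover have "\<bar>LINT x:K|N. f x\<bar> \<le> 1" by (rule set_int_bound) (use assms g in simp_all)
  ultimately show ?thesis by linarith
qed

lemma FM_upper:
  fixes M :: "'a::euclidean_space measure" and f :: "'a \<Rightarrow> real"
  assumes "prob_on K M" "prob_on K N" "\<forall>x\<in>K. \<bar>f x\<bar> \<le> 1" "1-lipschitz_on K f"
  shows "\<bar>(LINT x:K|M. f x) - (LINT x:K|N. f x)\<bar> \<le> FM_dist K M N"
  unfolding FM_dist_def
  apply (rule cSup_upper)
  subgoal using assms(3,4) by blast
  subgoal by (rule bdd_aboveI[where M="2::real"]) (use bound2[OF assms(1,2)] in blast)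
  done

lemma FM_sym: "FM_dist K M N = FM_dist K N M"
  unfolding FM_dist_def by (simp add: abs_minus_commute)

lemma tent:
  fixes M :: "'a::euclidean_space measure" and d :: "'a \<Rightarrow> real"
  assumes M: "prob_on K M" and N: "prob_on K N" and e: "0 < e" "e \<le> 1"
    and lip: "1-lipschitz_on UNIV d"
  shows "e * measure N {y. d y < a} \<le> e * measure M {y. d y < a + e} + FM_dist K M N"
proof -
  define f where "f y = max 0 (min e (a + e - d y))" for y
  have key: "\<bar>max 0 (min e (c - u)) - max 0 (min e (c - v))\<bar> \<le> \<bar>u - v\<bar>" for c u v :: real
    by (simp add: max_def min_def abs_if)
  have flip: "1-lipschitz_on K f"
  proof (rule lipschitz_onI)
    fix x y assume "x \<in> K" "y \<in> K"
    have "dist (d x) (d y) \<le> 1 * dist x y" by (rule lipschitz_onD[OF lip]) auto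
    then show "dist (f x) (f y) \<le> 1 * dist x y"
      using key[of "a+e" "d x" "d y"] by (simp add: f_def dist_real_def)
  qed simp
  have fb: "\<forall>x\<in>K. \<bar>f x\<bar> \<le> 1" using e by (auto simp: f_def)
  have dc: "continuous_on UNIV d" by (rule lipschitz_on_continuous_on[OF lip])
  have dm: "d \<in> borel_measurable borel" using dc by (rule borel_measurable_continuous_onI)
  have fm: "f \<in> borel_measurable borel" unfolding f_def using dm by measurable
  note PM = prob_onD[OF M] and PN = prob_onD[OF N]
  have FM: "\<bar>(\<integral>x. f x \<partial>M) - (\<integral>x. f x \<partial>N)\<bar> \<le> FM_dist K M N"
    using FM_upper[OF M N fb flip] set_int_eq[OF M fm] set_int_eq[OF N fm] by simp
  have fmM: "f \<in> borel_measurable M" and fmN: "f \<in> borel_measurable N"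
    using fm by (simp_all add: measurable_cong_sets[OF PM(2) refl] measurable_cong_sets[OF PN(2) refl])
  have S1: "{y. d y < a} \<in> sets borel" "{y. d y < a + e} \<in> sets borel" using dm by measurable
  interpret pM: prob_space M using PM by simp
  interpret pN: prob_space N using PN by simp
  have intfM: "integrable M f"
    by (rule pM.integrable_const_bound[where B=1]) (use fb e fmM in \<open>auto simp: f_def\<close>)
  have intfN: "integrable N f"
    by (rule pN.integrable_const_bound[where B=1]) (use fb e fmN in \<open>auto simp: f_def\<close>)
  have iN: "integrable N (\<lambda>y. e * indicator {y. d y < a} y)"
    by (intro integrable_mult_right integrable_real_indicator) (use S1 PN(2) in \<open>auto simp: pN.emeasure_finite less_top[symmetric]\<close>)
  have iM: "integrable M (\<lambda>y. e * indicator {y. d y < a + e} y)"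
    by (intro integrable_mult_right integrable_real_indicator) (use S1 PM(2) in \<open>auto simp: pM.emeasure_finite less_top[symmetric]\<close>)
  have "e * measure N {y. d y < a} = (\<integral>y. e * indicator {y. d y < a} y \<partial>N)"
    using PN(3) by simp
  also have "\<dots> \<le> (\<integral>y. f y \<partial>N)"
    by (rule integral_mono[OF iN intfN]) (use e in \<open>auto simp: f_def indicator_def\<close>)
  finally have A: "e * measure N {y. d y < a} \<le> (\<integral>y. f y \<partial>N)" .
  have "(\<integral>y. f y \<partial>M) \<le> (\<integral>y. e * indicator {y. d y < a + e} y \<partial>M)"
    by (rule integral_mono[OF intfM iM]) (use e in \<open>auto simp: f_def indicator_def\<close>)
  also have "\<dots> = e * measure M {y. d y < a + e}"
    using PM(3) by simp
  finally have B: "(\<integral>y. f y \<partial>M) \<le> e * measure M {y. d y < a + e}" .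
  show ?thesis using A B FM by linarith
qed

lemma meas_mono:
  fixes M :: "'a::euclidean_space measure"
  assumes "prob_on K M" "A \<subseteq> B" "B \<in> sets borel"
  shows "measure M A \<le> measure M B"
proof -
  interpret prob_space M using prob_onD[OF assms(1)] by simp
  show ?thesis using assms prob_onD[OF assms(1)] by (intro finite_measure_mono) auto
qed

lemma meas_le1:
  fixes M :: "'a::euclidean_space measure"
  assumes "prob_on K M"
  shows "measure M A \<le> 1"
proof -
  interpret prob_space M using prob_onD[OF assms(1)] by simp
  show ?thesis by simp
qed

lemma fin_meas:
  fixes M :: "'a::euclidean_space measure"
  assumes "prob_on K M" "finite S" "measure M S = 1" "A \<in> sets borel"
  shows "measure M A = (\<Sum>x\<in>S \<inter> A. measure M {x})"
proof -
  note P = prob_onD[OF assms(1)]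
  interpret prob_space M using P by simp
  have Sm: "S \<in> sets M" using assms(2) P(2) by (simp add: finite_imp_closed)
  have Am: "A \<in> sets M" using assms(4) P(2) by simp
  have "measure M (UNIV - S) = 0" using prob_compl[OF Sm] assms(3) P(3) by simp
  then have "UNIV - S \<in> null_sets M" using Sm P(3)
    by (metis Diff_UNIV emeasure_eq_measure ennreal_0 null_setsI sets.compl_sets)
  then have nl: "A - S \<in> null_sets M" by (rule null_sets_subset) (use Am Sm in auto)
  have "measure M A = measure M (A - (A - S))" using measure_Diff_null_set[OF Am nl] by simp
  also have "A - (A - S) = S \<inter> A" by auto
  also have "measure M (S \<inter> A) = (\<Sum>x\<in>S \<inter> A. measure M {x})"
    by (rule measure_eq_sum_singleton) (use assms(2) P(2) in auto)
  finally show ?thesis .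
qed

lemma fin_int:
  fixes M :: "'a::euclidean_space measure" and g :: "'a \<Rightarrow> real"
  assumes "prob_on K M" "finite S" "measure M S = 1" "g \<in> borel_measurable borel"
  shows "(\<integral>y. g y \<partial>M) = (\<Sum>x\<in>S. measure M {x} * g x)"
proof -
  note P = prob_onD[OF assms(1)]
  interpret prob_space M using P by simp
  have Sm: "S \<in> sets M" using assms(2) P(2) by (simp add: finite_imp_closed)
  have ae: "AE y in M. y \<in> S" using AE_prob_1[OF assms(3)] .
  have sg: "\<And>x. {x} \<in> sets M" using P(2) by simp
  have ii: "integrable M (\<lambda>y. g x * indicator {x} y)" for x
    by (intro integrable_mult_right integrable_real_indicator) (auto simp: sg emeasure_finite less_top[symmetric])
  have "(\<integral>y. g y \<partial>M) = (\<integral>y. (\<Sum>x\<in>S. g x * indicator {x} y) \<partial>M)"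
  proof (rule integral_cong_AE)
    show "g \<in> borel_measurable M" using assms(4) by (simp add: measurable_cong_sets[OF P(2) refl])
    show "(\<lambda>y. \<Sum>x\<in>S. g x * indicator {x} y) \<in> borel_measurable M"
      using sg by measurable
    show "AE y in M. g y = (\<Sum>x\<in>S. g x * indicator {x} y)"
      using ae
    proof eventually_elim
      case (elim y)
      have "(\<Sum>x\<in>S. g x * indicator {x} y) = (\<Sum>x\<in>S. if x = y then g y else 0)"
        by (intro sum.cong) (auto simp: indicator_def)
      also have "\<dots> = g y" using elim assms(2) by simp
      finally show ?case by simp
    qed
  qed
  also have "\<dots> = (\<Sum>x\<in>S. \<integral>y. g x * indicator {x} y \<partial>M)"
    by (rule Bochner_Integration.integral_sum) (rule ii)
  also have "\<dots> = (\<Sum>x\<in>S. measure M {x} * g x)"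
    using P(3) by (simp add: mult.commute)
  finally show ?thesis .
qed



lemma dist_lip: "1-lipschitz_on UNIV (dist (x::'a::metric_space))"
proof (rule lipschitz_onI)
  fix y z
  have "\<bar>dist y x - dist x z\<bar> \<le> dist y z" by (rule abs_dist_diff_le)
  then show "dist (dist x y) (dist x z) \<le> 1 * dist y z" by (simp add: dist_real_def dist_commute)
qed simp

lemma infdist_lip: "1-lipschitz_on UNIV (\<lambda>y::'a::metric_space. infdist y S)"
  by (rule lipschitz_onI) (simp_all add: dist_real_def infdist_triangle_abs)

lemma ball_eq: "{y. dist x y < a} = ball x a" by (auto simp: ball_def)

lemma tent_ball:
  fixes M :: "'a::euclidean_space measure"
  assumes "prob_on K M" "prob_on K N" "0 < e" "e \<le> 1" "FM_dist K M N \<le> t * e"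
  shows "measure N (ball x a) \<le> measure M (ball x (a + e)) + t"
proof -
  have "e * measure N (ball x a) \<le> e * measure M (ball x (a + e)) + t * e"
    using tent[OF assms(1-4) dist_lip, of x a] assms(5) by (simp add: ball_eq)
  also have "\<dots> = e * (measure M (ball x (a + e)) + t)" by (simp add: algebra_simps)
  finally show ?thesis using assms(3) by (simp add: mult_le_cancel_left_pos)
qed


lemma tent_ball':
  fixes M :: "'a::euclidean_space measure"
  assumes "prob_on K M" "prob_on K N" "0 < e" "e \<le> 1" "FM_dist K M N \<le> t * e"
  shows "measure M (ball x a) \<le> measure N (ball x (a + e)) + t"
  by (rule tent_ball[OF assms(2,1,3,4)]) (use assms(5) FM_sym[of K M N] in simp)

lemma powr_le1: "0 \<le> (b::real) \<Longrightarrow> b \<le> 1 \<Longrightarrow> 0 < c \<Longrightarrow> b powr c \<le> 1"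
  using powr_mono2[of c b 1] by simp

theorem corollary2p2:
  fixes K :: "'a::euclidean_space set" and q :: real
  assumes "compact K" and "q > 1"
  shows "\<exists>C>0. \<forall>M. finsupp_on K M \<longrightarrow> (\<forall>r>0. \<exists>\<delta>>0. \<forall>N. prob_on K N \<and> FM_dist K M N < \<delta> \<longrightarrow>
           corr_int N r q \<le> C * corr_int M (2 * r) q \<and> corr_int N (2 * r) q \<ge> corr_int M r q / C)"
proof (rule exI[of _ "2::real"], intro conjI allI impI)
  show "(0::real) < 2" by simp
  fix M :: "'a measure" and r :: real
  assume fs: "finsupp_on K M" and r: "0 < r"
  have PMo: "prob_on K M" using fs by (simp add: finsupp_on_def)
  note PM = prob_onD[OF PMo]
  interpret pM: prob_space M using PM by simp
  obtain S where S: "finite S" "S \<subseteq> K" "emeasure M S = 1" using fs by (auto simp: finsupp_on_def)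
  have S1: "measure M S = 1" using S(3) by (simp add: measure_def)
  have Sne: "S \<noteq> {}" using S1 by auto
  define p where "p x = measure M {x}" for x
  define mb where "mb s x = measure M (ball x s)" for s x
  have p0: "p x \<ge> 0" for x by (simp add: p_def)
  have mb0: "mb s x \<ge> 0" for s x by (simp add: mb_def)
  have pmb: "p x \<le> mb s x" if "s > 0" for s x
    unfolding p_def mb_def by (rule meas_mono[OF PMo]) (use that in auto)
  have sump: "(\<Sum>x\<in>S. p x) = 1"
    using fin_meas[OF PMo S(1) S1, of S] S1 S(1) by (simp add: p_def finite_imp_closed)
  have Iform: "corr_int M s q = (\<Sum>x\<in>S. p x * mb s x powr (q - 1))" for s
  proof -
    have "(\<lambda>y. measure M (ball y s)) \<in> borel_measurable M" by (rule meas_ball_measurable[OF PMo])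
    then have "(\<lambda>y. measure M (ball y s)) \<in> borel_measurable borel"
      by (simp add: measurable_cong_sets[OF PM(2) refl])
    then have "(\<lambda>y. measure M (ball y s) powr (q - 1)) \<in> borel_measurable borel" by measurable
    then show ?thesis unfolding corr_int_def
      by (subst fin_int[OF PMo S(1) S1]) (auto simp: p_def mb_def)
  qed
  have Ipos: "corr_int M s q > 0" if "s > 0" for s
  proof -
    have "\<exists>x\<in>S. p x > 0"
    proof (rule ccontr)
      assume "\<not> (\<exists>x\<in>S. p x > 0)"
      then have "\<forall>x\<in>S. p x \<le> 0" by (simp add: not_less)
      then have "(\<Sum>x\<in>S. p x) \<le> 0" by (intro sum_nonpos) auto
      then show False using sump by simp
    qed
    then obtain x where x: "x \<in> S" "p x > 0" by blast
    have "0 < p x * mb s x powr (q - 1)"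
      using x pmb[OF that, of x] by simp
    then show ?thesis unfolding Iform
      by (intro sum_pos2[OF S(1) x(1)]) (auto intro!: mult_nonneg_nonneg p0)
  qed
  have ev_eps: "eventually (\<lambda>e. e \<le> 1 \<and> 2 * e \<le> r \<and> (\<forall>x\<in>S. \<forall>y\<in>S. x \<noteq> y \<longrightarrow> 2 * e \<le> dist x y)) (at_right (0::real))"
  proof -
    have e1: "eventually (\<lambda>e. e \<le> 1 \<and> 2 * e \<le> r) (at_right (0::real))"
      unfolding eventually_at_right_field using r by (intro exI[of _ "min 1 (r/2)"]) auto
    have "eventually (\<lambda>e. x \<noteq> y \<longrightarrow> 2 * e \<le> dist x y) (at_right (0::real))" for x y :: 'a
    proof (cases "x = y")
      case False
      then have "dist x y > 0" by simp
      then show ?thesis unfolding eventually_at_right_field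
        by (intro exI[of _ "dist x y / 2"]) auto
    qed simp
    then have "eventually (\<lambda>e. \<forall>x\<in>S. \<forall>y\<in>S. x \<noteq> y \<longrightarrow> 2 * e \<le> dist x y) (at_right (0::real))"
      using S(1) by (intro eventually_ball_finite ballI) auto
    then show ?thesis using e1 by eventually_elim auto
  qed
  then obtain b where b: "b > 0" "\<forall>e>0. e < b \<longrightarrow> e \<le> 1 \<and> 2 * e \<le> r \<and> (\<forall>x\<in>S. \<forall>y\<in>S. x \<noteq> y \<longrightarrow> 2 * e \<le> dist x y)"
    unfolding eventually_at_right_field by auto
  define \<epsilon> where "\<epsilon> = b / 2"
  have eps: "0 < \<epsilon>" "\<epsilon> \<le> 1" "2 * \<epsilon> \<le> r" "\<And>x y. x \<in> S \<Longrightarrow> y \<in> S \<Longrightarrow> x \<noteq> y \<Longrightarrow> 2 * \<epsilon> \<le> dist x y"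
    using b(2)[rule_format, of "b/2"] b(1) unfolding \<epsilon>_def by auto
  define F1 where "F1 t = (\<Sum>x\<in>S. (p x + t) * (mb (2 * r) x + t) powr (q - 1)) + 2 * t" for t
  define F2 where "F2 t = (\<Sum>x\<in>S. max 0 (p x - 2 * t) * (max 0 (mb r x - t)) powr (q - 1))" for t
  have evpos: "eventually (\<lambda>t. t > 0) (at_right (0::real))"
    by (simp add: eventually_at_right_less)
  have lim1: "(F1 \<longlongrightarrow> corr_int M (2 * r) q) (at_right 0)"
  proof -
    have "(F1 \<longlongrightarrow> (\<Sum>x\<in>S. (p x + 0) * (mb (2 * r) x + 0) powr (q - 1)) + 2 * 0) (at_right 0)"
      unfolding F1_def
    proof (intro tendsto_intros)
      fix x show "mb (2 * r) x + 0 \<noteq> 0 \<or> 0 < q - 1 \<and> (\<forall>\<^sub>F t in at_right 0. 0 \<le> mb (2 * r) x + t)"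
        using assms(2) evpos mb0[of "2*r" x] by (auto elim: eventually_mono)
    qed
    then show ?thesis by (simp add: Iform)
  qed
  have lim2: "(F2 \<longlongrightarrow> corr_int M r q) (at_right 0)"
  proof -
    have "(F2 \<longlongrightarrow> (\<Sum>x\<in>S. max 0 (p x - 2 * 0) * (max 0 (mb r x - 0)) powr (q - 1))) (at_right 0)"
      unfolding F2_def
    proof (intro tendsto_intros)
      fix x show "max 0 (mb r x - 0) \<noteq> 0 \<or> 0 < q - 1 \<and> (\<forall>\<^sub>F t in at_right 0. 0 \<le> max 0 (mb r x - t))"
        using assms(2) by auto
    qed
    then show ?thesis by (simp add: Iform p0 mb0 max_absorb2)
  qed
  have "eventually (\<lambda>t. F1 t < 2 * corr_int M (2 * r) q) (at_right 0)"
    using lim1 Ipos[of "2*r"] r by (intro order_tendstoD(2)) auto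
  moreover have "eventually (\<lambda>t. F2 t > corr_int M r q / 2) (at_right 0)"
    using lim2 Ipos[of r] r by (intro order_tendstoD(1)) auto
  ultimately have "eventually (\<lambda>t. F1 t < 2 * corr_int M (2 * r) q \<and> F2 t > corr_int M r q / 2) (at_right (0::real))"
    by eventually_elim auto
  then obtain b2 where b2: "b2 > 0" "\<forall>t>0. t < b2 \<longrightarrow> F1 t < 2 * corr_int M (2 * r) q \<and> F2 t > corr_int M r q / 2"
    unfolding eventually_at_right_field by auto
  define t where "t = b2 / 2"
  have t: "0 < t" "F1 t < 2 * corr_int M (2 * r) q" "F2 t > corr_int M r q / 2"
    using b2(2)[rule_format, of "b2/2"] b2(1) unfolding t_def by auto
  show "\<exists>\<delta>>0. \<forall>N. prob_on K N \<and> FM_dist K M N < \<delta> \<longrightarrow>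
           corr_int N r q \<le> 2 * corr_int M (2 * r) q \<and> corr_int N (2 * r) q \<ge> corr_int M r q / 2"
  proof (rule exI[of _ "t * \<epsilon>"], rule conjI[OF _ allI[OF impI]])
    show "0 < t * \<epsilon>" using t eps by simp
  next
    fix N assume NN: "prob_on K N \<and> FM_dist K M N < t * \<epsilon>"
    then have PNo: "prob_on K N" and FM: "FM_dist K M N \<le> t * \<epsilon>" by auto
    note PN = prob_onD[OF PNo]
    interpret pN: prob_space N using PN by simp
    have ballS: "S \<inter> ball x (2 * \<epsilon>) = {x}" if xS: "x \<in> S" for x
    proof -
      have "z = x" if "z \<in> S" "dist x z < 2 * \<epsilon>" for z
        using eps(4)[OF xS that(1)] that(2) by (cases "x = z") auto
      then show ?thesis using xS eps(1) by auto
    qed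
    have mbS: "mb (2 * \<epsilon>) x = p x" if "x \<in> S" for x
    proof -
      have "mb (2 * \<epsilon>) x = (\<Sum>z\<in>S \<inter> ball x (2 * \<epsilon>). measure M {z})"
        unfolding mb_def by (rule fin_meas[OF PMo S(1) S1]) simp
      also have "\<dots> = p x" using ballS[OF that] by (simp add: p_def)
      finally show ?thesis .
    qed
    have FM2: "FM_dist K M N \<le> (2 * t) * (\<epsilon> / 2)" using FM by simp
    have e2: "0 < \<epsilon> / 2" "\<epsilon> / 2 \<le> 1" using eps by auto
    have ballm: "ball x s \<in> sets borel" for x :: 'a and s by simp
    have A1: "measure N (ball y r) \<le> measure M (ball y (r + \<epsilon>)) + t" for y
      by (rule tent_ball[OF PMo PNo eps(1) eps(2) FM])
    have B1: "measure N (ball x \<epsilon>) \<le> p x + t" if "x \<in> S" for x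
    proof -
      have "measure N (ball x \<epsilon>) \<le> measure M (ball x (\<epsilon> + \<epsilon>)) + t"
        by (rule tent_ball[OF PMo PNo eps(1) eps(2) FM])
      also have "\<epsilon> + \<epsilon> = 2 * \<epsilon>" by simp
      also have "measure M (ball x (2 * \<epsilon>)) = p x" using mbS[OF that] by (simp only: mb_def)
      finally show ?thesis .
    qed
    have B2: "p x - 2 * t \<le> measure N (ball x \<epsilon>)" for x
    proof -
      have "measure M (ball x (\<epsilon> / 2)) \<le> measure N (ball x (\<epsilon> / 2 + \<epsilon> / 2)) + 2 * t"
        by (rule tent_ball'[OF PMo PNo e2 FM2])
      moreover have "p x \<le> measure M (ball x (\<epsilon> / 2))" using pmb[OF e2(1), of x] by (simp add: mb_def)
      moreover have "\<epsilon> / 2 + \<epsilon> / 2 = \<epsilon>" by simp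
      ultimately show ?thesis by (metis add.commute diff_le_eq order_trans add_le_cancel_right)
    qed
    define U where "U = {y. infdist y S < \<epsilon>}"
    have infc: "continuous_on UNIV (\<lambda>y. infdist y S)" by (rule lipschitz_on_continuous_on[OF infdist_lip])
    have infm: "(\<lambda>y. infdist y S) \<in> borel_measurable borel" using infc by (rule borel_measurable_continuous_onI)
    have Um: "{y. infdist y S < a} \<in> sets borel" for a using infm by measurable
    have C1: "1 - 2 * t \<le> measure N U"
    proof -
      have "(\<epsilon>/2) * measure M {y. infdist y S < \<epsilon>/2} \<le> (\<epsilon>/2) * measure N {y. infdist y S < \<epsilon>/2 + \<epsilon>/2} + FM_dist K N M"
        by (rule tent[OF PNo PMo e2 infdist_lip])
      moreover have "measure M S \<le> measure M {y. infdist y S < \<epsilon>/2}"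
        by (rule meas_mono[OF PMo _ Um]) (use e2 in auto)
      moreover have "\<epsilon> / 2 + \<epsilon> / 2 = \<epsilon>" by simp
      ultimately have X: "(\<epsilon>/2) * measure M {y. infdist y S < \<epsilon>/2} \<le> (\<epsilon>/2) * measure N U + FM_dist K N M"
        and Y: "1 \<le> measure M {y. infdist y S < \<epsilon>/2}"
        using S1 unfolding U_def by simp_all
      have Z: "(\<epsilon>/2) * 1 \<le> (\<epsilon>/2) * measure M {y. infdist y S < \<epsilon>/2}"
        using Y e2 by (intro mult_left_mono) auto
      have W: "FM_dist K N M \<le> (\<epsilon>/2) * (2 * t)" using FM2 FM_sym[of K M N] by (simp add: mult.commute)
      have "(\<epsilon>/2) * 1 \<le> (\<epsilon>/2) * measure N U + (\<epsilon>/2) * (2 * t)"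
        using X Z W by linarith
      then have "(\<epsilon>/2) * 1 \<le> (\<epsilon>/2) * (measure N U + 2 * t)" by (simp add: algebra_simps)
      then show ?thesis using e2 by (simp add: mult_le_cancel_left_pos)
    qed
    define a where "a x = (mb (2 * r) x + t) powr (q - 1)" for x
    have a0: "0 \<le> a x" for x by (simp add: a_def)
    define h where "h y = (\<Sum>x\<in>S. a x * indicator (ball x \<epsilon>) y) + indicator (- U) y" for y
    have h0: "0 \<le> h y" for y unfolding h_def by (intro add_nonneg_nonneg sum_nonneg) (auto simp: a0)
    have i1: "integrable N (\<lambda>y. a x * indicator (ball x \<epsilon>) y)" for x
      using PN(2) by (intro integrable_mult_right integrable_real_indicator)
         (auto simp: pN.emeasure_finite less_top[symmetric])
    have i2: "integrable N (\<lambda>y. \<Sum>x\<in>S. a x * indicator (ball x \<epsilon>) y)"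
      by (rule Bochner_Integration.integrable_sum) (rule i1)
    have i3: "integrable N (indicator (- U) :: 'a \<Rightarrow> real)"
      using PN(2) Um[of \<epsilon>] by (intro integrable_real_indicator)
         (auto simp: pN.emeasure_finite less_top[symmetric] U_def)
    have hint: "integrable N h"
      unfolding h_def by (rule Bochner_Integration.integrable_add[OF i2 i3])
    have gh: "measure N (ball y r) powr (q - 1) \<le> h y" for y
    proof (cases "y \<in> U")
      case False
      have "measure N (ball y r) powr (q - 1) \<le> 1"
        by (rule powr_le1) (use meas_le1[OF PNo] assms(2) in auto)
      moreover have "0 \<le> (\<Sum>x\<in>S. a x * indicator (ball x \<epsilon>) y)" by (intro sum_nonneg) (auto simp: a0)
      ultimately show ?thesis using False by (simp add: h_def)
    next
      case True
      obtain x where x: "x \<in> S" "infdist y S = dist y x"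
        using infdist_attains_inf[OF finite_imp_closed[OF S(1)] Sne, of y] by blast
      have dyx: "dist y x < \<epsilon>" using True x unfolding U_def by simp
      have "measure M (ball y (r + \<epsilon>)) \<le> mb (2 * r) x"
        unfolding mb_def
      proof (rule meas_mono[OF PMo _ ballm])
        show "ball y (r + \<epsilon>) \<subseteq> ball x (2 * r)"
        proof
          fix z assume "z \<in> ball y (r + \<epsilon>)"
          then have "dist y z < r + \<epsilon>" by simp
          moreover have "dist x z \<le> dist x y + dist y z" by (rule dist_triangle)
          ultimately show "z \<in> ball x (2 * r)" using dyx eps(3) by (simp add: dist_commute)
        qed
      qed
      then have NY: "measure N (ball y r) \<le> mb (2 * r) x + t" using A1[of y] by simp
      have "measure N (ball y r) powr (q - 1) \<le> a x"
        unfolding a_def by (rule powr_mono2) (use NY assms(2) in auto)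
      also have "a x = a x * indicator (ball x \<epsilon>) y" using dyx by (simp add: dist_commute)
      also have "\<dots> \<le> (\<Sum>x\<in>S. a x * indicator (ball x \<epsilon>) y)"
        by (rule member_le_sum[OF x(1)]) (auto simp: a0 S(1))
      also have "\<dots> \<le> h y" by (simp add: h_def)
      finally show ?thesis .
    qed
    have "corr_int N r q \<le> (\<integral>y. h y \<partial>N)"
      unfolding corr_int_def by (rule integral_mono'[OF hint]) (auto simp: gh h0)
    also have "(\<integral>y. h y \<partial>N) = (\<Sum>x\<in>S. a x * measure N (ball x \<epsilon>)) + measure N (- U)"
    proof -
      have "(\<integral>y. h y \<partial>N) = (\<integral>y. (\<Sum>x\<in>S. a x * indicator (ball x \<epsilon>) y) \<partial>N) + (\<integral>y. indicator (- U) y \<partial>N)"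
        unfolding h_def by (rule Bochner_Integration.integral_add[OF i2 i3])
      also have "(\<integral>y. (\<Sum>x\<in>S. a x * indicator (ball x \<epsilon>) y) \<partial>N) = (\<Sum>x\<in>S. \<integral>y. a x * indicator (ball x \<epsilon>) y \<partial>N)"
        by (rule Bochner_Integration.integral_sum) (rule i1)
      finally show ?thesis using PN(3) by simp
    qed
    also have "\<dots> \<le> (\<Sum>x\<in>S. a x * (p x + t)) + 2 * t"
    proof (rule add_mono)
      show "(\<Sum>x\<in>S. a x * measure N (ball x \<epsilon>)) \<le> (\<Sum>x\<in>S. a x * (p x + t))"
        by (intro sum_mono mult_left_mono B1 a0)
      have "measure N (- U) = 1 - measure N U"
        using pN.prob_compl[of U] PN(2,3) Um[of \<epsilon>] by (simp add: U_def Compl_eq_Diff_UNIV)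
      then show "measure N (- U) \<le> 2 * t" using C1 by simp
    qed
    also have "\<dots> = F1 t" unfolding F1_def a_def by (simp add: mult.commute)
    finally have part1: "corr_int N r q \<le> 2 * corr_int M (2 * r) q" using t(2) by simp
    define bb where "bb x = (max 0 (mb r x - t)) powr (q - 1)" for x
    have bb0: "0 \<le> bb x" for x by (simp add: bb_def)
    define h2 where "h2 y = (\<Sum>x\<in>S. bb x * indicator (ball x \<epsilon>) y)" for y
    have gm: "(\<lambda>y. measure N (ball y (2 * r)) powr (q - 1)) \<in> borel_measurable N"
      using meas_ball_measurable[OF PNo, of "2 * r"] by measurable
    have gint: "integrable N (\<lambda>y. measure N (ball y (2 * r)) powr (q - 1))"
      by (rule pN.integrable_const_bound[where B=1])
         (use gm assms(2) in \<open>auto intro!: powr_le1 simp: meas_le1[OF PNo]\<close>)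
    have i1': "integrable N (\<lambda>y. bb x * indicator (ball x \<epsilon>) y)" for x
      using PN(2) by (intro integrable_mult_right integrable_real_indicator)
         (auto simp: pN.emeasure_finite less_top[symmetric])
    have h2int: "integrable N h2" unfolding h2_def
      by (rule Bochner_Integration.integrable_sum) (rule i1')
    have hg2: "h2 y \<le> measure N (ball y (2 * r)) powr (q - 1)" for y
    proof (cases "\<exists>x\<in>S. y \<in> ball x \<epsilon>")
      case False
      then have "h2 y = 0" unfolding h2_def by (intro sum.neutral) auto
      then show ?thesis by simp
    next
      case True
      then obtain x where x: "x \<in> S" "dist x y < \<epsilon>" by auto
      have "h2 y = (\<Sum>x'\<in>S. if x' = x then bb x else 0)"
        unfolding h2_def
      proof (intro sum.cong refl)
        fix x' assume x': "x' \<in> S"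
        show "bb x' * indicator (ball x' \<epsilon>) y = (if x' = x then bb x else 0)"
        proof (cases "x' = x")
          case True then show ?thesis using x by simp
        next
          case False
          have "2 * \<epsilon> \<le> dist x' x" using eps(4)[OF x' x(1) False] .
          moreover have "dist x' x \<le> dist x' y + dist x y" by (simp add: dist_triangle2 dist_commute)
          ultimately have "\<not> dist x' y < \<epsilon>" using x(2) by linarith
          then show ?thesis using False by simp
        qed
      qed
      also have "\<dots> = bb x" using x(1) S(1) by simp
      also have "bb x \<le> measure N (ball y (2 * r)) powr (q - 1)"
        unfolding bb_def
      proof (rule powr_mono2)
        show "0 \<le> q - 1" using assms(2) by simp
        show "0 \<le> max 0 (mb r x - t)" by simp
        have "mb r x \<le> measure M (ball x (2 * r - 2 * \<epsilon>))"
          unfolding mb_def by (rule meas_mono[OF PMo _ ballm]) (use eps(3) in auto)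
        also have "\<dots> \<le> measure N (ball x (2 * r - 2 * \<epsilon> + \<epsilon>)) + t"
          by (rule tent_ball'[OF PMo PNo eps(1) eps(2) FM])
        also have "measure N (ball x (2 * r - 2 * \<epsilon> + \<epsilon>)) \<le> measure N (ball y (2 * r))"
        proof (rule meas_mono[OF PNo _ ballm])
          show "ball x (2 * r - 2 * \<epsilon> + \<epsilon>) \<subseteq> ball y (2 * r)"
          proof
            fix z assume "z \<in> ball x (2 * r - 2 * \<epsilon> + \<epsilon>)"
            then have "dist x z < 2 * r - \<epsilon>" by simp
            moreover have "dist y z \<le> dist y x + dist x z" by (rule dist_triangle)
            ultimately show "z \<in> ball y (2 * r)" using x(2) by (simp add: dist_commute)
          qed
        qed
        finally show "max 0 (mb r x - t) \<le> measure N (ball y (2 * r))" by simp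
      qed
      finally show ?thesis .
    qed
    have "F2 t = (\<Sum>x\<in>S. bb x * max 0 (p x - 2 * t))"
      unfolding F2_def bb_def by (simp add: mult.commute)
    also have "\<dots> \<le> (\<Sum>x\<in>S. bb x * measure N (ball x \<epsilon>))"
      by (intro sum_mono mult_left_mono bb0 max.boundedI B2) simp
    also have "\<dots> = (\<Sum>x\<in>S. \<integral>y. bb x * indicator (ball x \<epsilon>) y \<partial>N)"
      using PN(3) by simp
    also have "\<dots> = (\<integral>y. h2 y \<partial>N)"
      unfolding h2_def by (rule Bochner_Integration.integral_sum[symmetric]) (rule i1')
    also have "\<dots> \<le> corr_int N (2 * r) q"
      unfolding corr_int_def by (rule integral_mono[OF h2int gint hg2])
    finally have part2: "corr_int N (2 * r) q \<ge> corr_int M r q / 2" using t(3) by simp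
    show "corr_int N r q \<le> 2 * corr_int M (2 * r) q \<and> corr_int N (2 * r) q \<ge> corr_int M r q / 2"
      using part1 part2 by simp
  qed
qed

end
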